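(* Let $\mathcal G$ be an MMPG arena with leader $l$. If $\sigma^N$ is a Nash equilibrium, $\sigma^L$ is a leader equilibrium and $(\sigma^I,\gamma^I)$ is an incentive equilibrium of $\mathcal G$, then $$r_l(\sigma^N)\;\le\; r_l(\sigma^L)\;\le\; r_l(\sigma^I)-\sum_{p\in P\setminus\{l\}}\gamma^I_p(\sigma^I).$$ (Equivalently, Nash strategy profiles $\subseteq$ leader strategy profiles $\subseteq$ incentive strategy profiles, when strategy profiles are paired with the all-zero incentive profile.) Moreover, there exists an MMPG arena in which every Nash equilibrium gives the leader a strictly smaller raw payoff than every leader equilibrium, and every leader equilibrium gives the leader a strictly smaller payoff than every incentive equilibrium gives her as overall payoff.
   Context: A multi-player mean-payoff game (MMPG) arena is a tuple $\mathcal G=(P,V,(V_p)_{p\in P},v_0,E,(r_p)_{p\in P})$ where $P$ is a finite set of players containing a distinguished leader $l\in P$ (the other players are called followers), $V$ is a finite set of vertices with initial vertex $v_0\in V$, $(V_p)_{p\in P}$ is a partition of $V$ (player $p$ owns $V_p$), $E\subseteq V\times V$ is an edge set such that every vertex has at least one successor, and $r_p:E\to\mathbb Q$ is the reward function of player $p$. A history is a finite sequence $h=v_0v_1\dots v_n$ starting at $v_0$ with $(v_i,v_{i+1})\in E$ for all $i<n$; $\mathsf{last}(h)=v_n$. A play is an infinite such sequence. A strategy of player $p$ is a function $\sigma_p$ assigning to every history $h$ with $\mathsf{last}(h)\in V_p$ a vertex $v$ with $(\mathsf{last}(h),v)\in E$. A strategy profile $\sigma=(\sigma_p)_{p\in P}$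 determines a unique play $\pi_\sigma$. The raw payoff of player $p$ on a play $\pi=v_0v_1\dots$ is $r_p(\pi)=\liminf_{n\to\infty}\frac1n\sum_{i=0}^{n-1}r_p((v_i,v_{i+1}))$, and $r_p(\sigma):=r_p(\pi_\sigma)$. For a profile $\sigma$, a player $p$ and a strategy $\sigma'$ of $p$, $\sigma_{p,\sigma'}$ denotes the profile obtained from $\sigma$ by replacing $p$'s strategy with $\sigma'$. An incentive for a follower $p$ is a function $\gamma_p$ from histories to $\mathbb R_{\ge 0}$; its value on a play $\pi=v_0v_1\dots$ is $\gamma_p(\pi)=\liminf_{n\to\infty}\frac1n\sum_{i=1}^{n}\gamma_p(v_0\dots v_i)$, and $\gamma_p(\sigma):=\gamma_p(\pi_\sigma)$. An incentive profile is $\gamma=(\gamma_p)_{p\in P\setminus\{l\}}$. For a pair $(\sigma,\gamma)$, the overall payoff of a follower $p$ is $r_p(\sigma)+\gamma_p(\sigma)$ and the overall payoff of the leader is $r_l(\sigma)-\sum_{p\in P\setminus\{l\}}\gamma_p(\sigma)$. A strategy profile $\sigma$ is a Nash equilibrium if $r_p(\sigma)\ge r_p(\sigma_{p,\sigma'})$ for all players $p\in P$ and all strategies $\sigma'$ of $p$. It is a leader strategy profile if this holds for all followers $p\in P\setminus\{l\}$; a leader equilibrium is a leader strategy profile maximising $r_l$ among all leader strategy profiles. A pair $(\sigma,\gamma)$ is an incentive strategy profile (ISP) if for every follower $p$ and every strategy $\sigma'$ of $p$: $r_p(\sigma)+\gamma_p(\sigma)\ge r_p(\sigma_{p,\sigma'})+\gamma_p(\sigma_{p,\sigma'})$.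 An incentive equilibrium is an ISP whose leader overall payoff is maximal among all ISPs. *)

theory Defs
  imports Complex_Main "HOL-Library.Extended_Real"
begin

text \<open>Multi-player mean-payoff game arenas. The partition of V is given by the
family owns p = V_p. Rewards are real-valued functions required to take rational
values on edges.\<close>

record ('p, 'v) mmpg =
  players :: "'p set"
  leader  :: 'p
  verts   :: "'v set"
  owns    :: "'p \<Rightarrow> 'v set"
  init    :: 'v
  edges   :: "('v \<times> 'v) set"
  rew     :: "'p \<Rightarrow> 'v \<times> 'v \<Rightarrow> real"

definition followers :: "('p, 'v) mmpg \<Rightarrow> 'p set" where
  "followers G = players G - {leader G}"

definition wf_mmpg :: "('p, 'v) mmpg \<Rightarrow> bool" where
  "wf_mmpg G \<longleftrightarrow>
     finite (players G) \<and> leader G \<in> players G \<and>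
     finite (verts G) \<and> init G \<in> verts G \<and>
     (\<forall>p\<in>players G. owns G p \<subseteq> verts G) \<and>
     (\<forall>v\<in>verts G. \<exists>!p. p \<in> players G \<and> v \<in> owns G p) \<and>
     edges G \<subseteq> verts G \<times> verts G \<and>
     (\<forall>v\<in>verts G. \<exists>w. (v, w) \<in> edges G) \<and>
     (\<forall>p\<in>players G. \<forall>e\<in>edges G. rew G p e \<in> \<rat>)"

definition is_history :: "('p, 'v) mmpg \<Rightarrow> 'v list \<Rightarrow> bool" where
  "is_history G h \<longleftrightarrow> h \<noteq> [] \<and> hd h = init G \<and>
     (\<forall>i. Suc i < length h \<longrightarrow> (h ! i, h ! Suc i) \<in> edges G)"

definition is_strategy :: "('p, 'v) mmpg \<Rightarrow> 'p \<Rightarrow> ('v list \<Rightarrow> 'v) \<Rightarrow> bool" where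
  "is_strategy G p s \<longleftrightarrow>
     (\<forall>h. is_history G h \<and> last h \<in> owns G p \<longrightarrow> (last h, s h) \<in> edges G)"

definition is_profile :: "('p, 'v) mmpg \<Rightarrow> ('p \<Rightarrow> 'v list \<Rightarrow> 'v) \<Rightarrow> bool" where
  "is_profile G \<sigma> \<longleftrightarrow> (\<forall>p\<in>players G. is_strategy G p (\<sigma> p))"

definition owner :: "('p, 'v) mmpg \<Rightarrow> 'v \<Rightarrow> 'p" where
  "owner G v = (THE p. p \<in> players G \<and> v \<in> owns G p)"

text \<open>hist G sigma n = v0 v1 ... vn, the length-(n+1) prefix of the play of sigma.\<close>
fun hist :: "('p, 'v) mmpg \<Rightarrow> ('p \<Rightarrow> 'v list \<Rightarrow> 'v) \<Rightarrow> nat \<Rightarrow> 'v list" where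
  "hist G \<sigma> 0 = [init G]"
| "hist G \<sigma> (Suc n) = hist G \<sigma> n @ [\<sigma> (owner G (last (hist G \<sigma> n))) (hist G \<sigma> n)]"

definition play :: "('p, 'v) mmpg \<Rightarrow> ('p \<Rightarrow> 'v list \<Rightarrow> 'v) \<Rightarrow> nat \<Rightarrow> 'v" where
  "play G \<sigma> n = last (hist G \<sigma> n)"

definition raw_payoff :: "('p, 'v) mmpg \<Rightarrow> ('p \<Rightarrow> 'v list \<Rightarrow> 'v) \<Rightarrow> 'p \<Rightarrow> ereal" where
  "raw_payoff G \<sigma> p =
     liminf (\<lambda>n. ereal ((\<Sum>i<n. rew G p (play G \<sigma> i, play G \<sigma> (Suc i))) / real n))"

definition inc_value :: "('p, 'v) mmpg \<Rightarrow> ('p \<Rightarrow> 'v list \<Rightarrow> 'v) \<Rightarrow> ('v list \<Rightarrow> real) \<Rightarrow> ereal" where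
  "inc_value G \<sigma> g = liminf (\<lambda>n. ereal ((\<Sum>i\<in>{1..n}. g (hist G \<sigma> i)) / real n))"

definition is_incentive_profile :: "('p, 'v) mmpg \<Rightarrow> ('p \<Rightarrow> 'v list \<Rightarrow> real) \<Rightarrow> bool" where
  "is_incentive_profile G \<gamma> \<longleftrightarrow>
     (\<forall>p\<in>followers G. \<forall>h. is_history G h \<longrightarrow> \<gamma> p h \<ge> 0)"

definition follower_overall ::
  "('p, 'v) mmpg \<Rightarrow> ('p \<Rightarrow> 'v list \<Rightarrow> 'v) \<Rightarrow> ('p \<Rightarrow> 'v list \<Rightarrow> real) \<Rightarrow> 'p \<Rightarrow> ereal" where
  "follower_overall G \<sigma> \<gamma> p = raw_payoff G \<sigma> p + inc_value G \<sigma> (\<gamma> p)"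

definition leader_overall ::
  "('p, 'v) mmpg \<Rightarrow> ('p \<Rightarrow> 'v list \<Rightarrow> 'v) \<Rightarrow> ('p \<Rightarrow> 'v list \<Rightarrow> real) \<Rightarrow> ereal" where
  "leader_overall G \<sigma> \<gamma> =
     raw_payoff G \<sigma> (leader G) - (\<Sum>p\<in>followers G. inc_value G \<sigma> (\<gamma> p))"

definition is_nash :: "('p, 'v) mmpg \<Rightarrow> ('p \<Rightarrow> 'v list \<Rightarrow> 'v) \<Rightarrow> bool" where
  "is_nash G \<sigma> \<longleftrightarrow> is_profile G \<sigma> \<and>
     (\<forall>p\<in>players G. \<forall>s. is_strategy G p s \<longrightarrow>
        raw_payoff G (\<sigma>(p := s)) p \<le> raw_payoff G \<sigma> p)"

definition is_leader_profile :: "('p, 'v) mmpg \<Rightarrow> ('p \<Rightarrow> 'v list \<Rightarrow> 'v) \<Rightarrow> bool" where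
  "is_leader_profile G \<sigma> \<longleftrightarrow> is_profile G \<sigma> \<and>
     (\<forall>p\<in>followers G. \<forall>s. is_strategy G p s \<longrightarrow>
        raw_payoff G (\<sigma>(p := s)) p \<le> raw_payoff G \<sigma> p)"

definition is_leader_eq :: "('p, 'v) mmpg \<Rightarrow> ('p \<Rightarrow> 'v list \<Rightarrow> 'v) \<Rightarrow> bool" where
  "is_leader_eq G \<sigma> \<longleftrightarrow> is_leader_profile G \<sigma> \<and>
     (\<forall>\<sigma>'. is_leader_profile G \<sigma>' \<longrightarrow>
        raw_payoff G \<sigma>' (leader G) \<le> raw_payoff G \<sigma> (leader G))"

definition is_isp ::
  "('p, 'v) mmpg \<Rightarrow> ('p \<Rightarrow> 'v list \<Rightarrow> 'v) \<Rightarrow> ('p \<Rightarrow> 'v list \<Rightarrow> real) \<Rightarrow> bool" where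
  "is_isp G \<sigma> \<gamma> \<longleftrightarrow> is_profile G \<sigma> \<and> is_incentive_profile G \<gamma> \<and>
     (\<forall>p\<in>followers G. \<forall>s. is_strategy G p s \<longrightarrow>
        follower_overall G (\<sigma>(p := s)) \<gamma> p \<le> follower_overall G \<sigma> \<gamma> p)"

definition is_incentive_eq ::
  "('p, 'v) mmpg \<Rightarrow> ('p \<Rightarrow> 'v list \<Rightarrow> 'v) \<Rightarrow> ('p \<Rightarrow> 'v list \<Rightarrow> real) \<Rightarrow> bool" where
  "is_incentive_eq G \<sigma> \<gamma> \<longleftrightarrow> is_isp G \<sigma> \<gamma> \<and>
     (\<forall>\<sigma>' \<gamma>'. is_isp G \<sigma>' \<gamma>' \<longrightarrow> leader_overall G \<sigma>' \<gamma>' \<le> leader_overall G \<sigma> \<gamma>)"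

end

theory Submission
  imports Defs
begin

lemma hist_len: "length (hist G \<sigma> n) = Suc n"
  by (induction n) auto

lemma play_Suc: "play G \<sigma> (Suc n) = \<sigma> (owner G (play G \<sigma> n)) (hist G \<sigma> n)"
  by (simp add: play_def)

lemma play_0: "play G \<sigma> 0 = init G" by (simp add: play_def)

lemma hist_map: "hist G \<sigma> n = map (play G \<sigma>) [0..<Suc n]"
proof (induction n)
  case 0 then show ?case by (simp add: play_def)
next
  case (Suc n)
  have "hist G \<sigma> (Suc n) = hist G \<sigma> n @ [play G \<sigma> (Suc n)]"
    by (simp add: play_def)
  then show ?case using Suc by simp
qed

lemma is_history_map:
  "is_history G (map f [0..<Suc n]) \<longleftrightarrow> f 0 = init G \<and> (\<forall>i<n. (f i, f (Suc i)) \<in> edges G)"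
  unfolding is_history_def
  by (auto simp: hd_conv_nth nth_map_upt simp del: upt_Suc)

lemma owner_props: assumes "wf_mmpg G" "v \<in> verts G"
  shows "owner G v \<in> players G \<and> v \<in> owns G (owner G v)"
proof -
  have "\<exists>!p. p \<in> players G \<and> v \<in> owns G p" using assms unfolding wf_mmpg_def by blast
  then show ?thesis unfolding owner_def by (rule theI')
qed

lemma play_inv: assumes wf: "wf_mmpg G" and pr: "is_profile G \<sigma>"
  shows "play G \<sigma> n \<in> verts G \<and> (\<forall>i<n. (play G \<sigma> i, play G \<sigma> (Suc i)) \<in> edges G)"
proof (induction n)
  case 0 then show ?case using wf by (simp add: play_0 wf_mmpg_def)
next
  case (Suc n)
  let ?o = "owner G (play G \<sigma> n)"
  have o: "?o \<in> players G" "play G \<sigma> n \<in> owns G ?o" using owner_props[OF wf] Suc.IH by blast+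
  have h: "is_history G (hist G \<sigma> n)" unfolding hist_map is_history_map using Suc.IH wf
    by (simp add: play_0)
  have l: "last (hist G \<sigma> n) = play G \<sigma> n" by (simp add: play_def)
  have "is_strategy G ?o (\<sigma> ?o)" using pr o unfolding is_profile_def by blast
  then have "(last (hist G \<sigma> n), \<sigma> ?o (hist G \<sigma> n)) \<in> edges G"
    using h o l unfolding is_strategy_def by metis
  then have e: "(play G \<sigma> n, play G \<sigma> (Suc n)) \<in> edges G" using l by (simp add: play_Suc)
  then have "play G \<sigma> (Suc n) \<in> verts G" using wf unfolding wf_mmpg_def by blast
  then show ?case using Suc.IH e by (auto simp: less_Suc_eq)
qed

lemma play_edge: "wf_mmpg G \<Longrightarrow> is_profile G \<sigma> \<Longrightarrow> (play G \<sigma> n, play G \<sigma> (Suc n)) \<in> edges G"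
  using play_inv[of G \<sigma> "Suc n"] by blast

lemma hist_history: "wf_mmpg G \<Longrightarrow> is_profile G \<sigma> \<Longrightarrow> is_history G (hist G \<sigma> n)"
  unfolding hist_map is_history_map using play_edge by (auto simp: play_0)

lemma absorb: assumes wf: "wf_mmpg G" and pr: "is_profile G \<sigma>"
  and k: "play G \<sigma> k = u" and ab: "\<forall>v. (u,v) \<in> edges G \<longrightarrow> v = u"
  shows "\<forall>i\<ge>k. play G \<sigma> i = u"
proof (intro allI impI)
  fix i assume "k \<le> i" then show "play G \<sigma> i = u"
  proof (induction i rule: dec_induct)
    case base then show ?case using k by simp
  next
    case (step m) then show ?case using play_edge[OF wf pr, of m] ab by auto
  qed
qed

lemma liminf_affine: fixes S :: "nat \<Rightarrow> real"
  assumes "\<forall>n\<ge>k. S n = C + real (n - k) * v"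
  shows "liminf (\<lambda>n. ereal (S n / real n)) = ereal v"
proof -
  have ev: "eventually (\<lambda>n. (C - real k * v) / real n + v = S n / real n) sequentially"
    unfolding eventually_sequentially
  proof (intro exI allI impI)
    fix n assume "max k 1 \<le> n"
    then have "k \<le> n" "n > 0" by auto
    then show "(C - real k * v) / real n + v = S n / real n"
      using assms by (simp add: of_nat_diff field_simps)
  qed
  have "(\<lambda>n. (C - real k * v) / real n + v) \<longlonglongrightarrow> 0 + v"
    by (intro tendsto_add lim_const_over_n tendsto_const)
  then have "(\<lambda>n. S n / real n) \<longlonglongrightarrow> v" using tendsto_cong[OF ev] by simp
  then have "(\<lambda>n. ereal (S n / real n)) \<longlonglongrightarrow> ereal v" by (rule tendsto_ereal)
  then show ?thesis by (intro lim_imp_Liminf) auto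
qed

lemma raw_const: assumes a: "\<forall>i\<ge>k. play G \<sigma> i = u"
  shows "raw_payoff G \<sigma> p = ereal (rew G p (u,u))"
proof -
  let ?f = "\<lambda>i. rew G p (play G \<sigma> i, play G \<sigma> (Suc i))"
  have "\<forall>n\<ge>k. (\<Sum>i<n. ?f i) = (\<Sum>i<k. ?f i) + real (n - k) * rew G p (u,u)"
  proof (intro allI impI)
    fix n assume "k \<le> n" then show "(\<Sum>i<n. ?f i) = (\<Sum>i<k. ?f i) + real (n - k) * rew G p (u,u)"
    proof (induction n rule: dec_induct)
      case base then show ?case by simp
    next
      case (step m)
      have "play G \<sigma> m = u" "play G \<sigma> (Suc m) = u" using a step.hyps by auto
      then have "?f m = rew G p (u,u)" by simp
      then show ?case using step.IH step.hyps by (simp add: Suc_diff_le algebra_simps)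
    qed
  qed
  then show ?thesis unfolding raw_payoff_def by (rule liminf_affine)
qed

lemma inc_const: assumes a: "\<forall>i\<ge>k. g (hist G \<sigma> i) = c"
  shows "inc_value G \<sigma> g = ereal c"
proof -
  let ?f = "\<lambda>i. g (hist G \<sigma> i)"
  have "\<forall>n\<ge>k. (\<Sum>i\<in>{1..n}. ?f i) = (\<Sum>i\<in>{1..k}. ?f i) + real (n - k) * c"
  proof (intro allI impI)
    fix n assume "k \<le> n" then show "(\<Sum>i\<in>{1..n}. ?f i) = (\<Sum>i\<in>{1..k}. ?f i) + real (n - k) * c"
    proof (induction n rule: dec_induct)
      case base then show ?case by simp
    next
      case (step m)
      have "k \<le> Suc m" using step.hyps by simp
      then have "?f (Suc m) = c" using a by blast
      then show ?case using step.IH step.hyps by (simp add: Suc_diff_le algebra_simps)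
    qed
  qed
  then show ?thesis unfolding inc_value_def by (rule liminf_affine)
qed

lemma inc_nonneg: assumes "wf_mmpg G" "is_profile G \<sigma>" "is_incentive_profile G \<gamma>" "p \<in> followers G"
  shows "inc_value G \<sigma> (\<gamma> p) \<ge> 0"
proof -
  have "\<And>n. \<gamma> p (hist G \<sigma> n) \<ge> 0" using assms hist_history unfolding is_incentive_profile_def by blast
  then have "\<And>n. ereal ((\<Sum>i\<in>{1..n}. \<gamma> p (hist G \<sigma> i)) / real n) \<ge> 0"
    by (simp add: sum_nonneg)
  then show ?thesis unfolding inc_value_def by (intro Liminf_bounded) auto
qed

lemma profile_upd: "is_profile G \<sigma> \<Longrightarrow> is_strategy G p s \<Longrightarrow> is_profile G (\<sigma>(p:=s))"
  unfolding is_profile_def by auto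

lemma inc_zero: "inc_value G \<sigma> (\<lambda>_. 0) = 0"
  unfolding inc_value_def by (simp add: zero_ereal_def[symmetric] Liminf_const)

lemma part2: "wf_mmpg G \<Longrightarrow> is_nash G \<sigma> \<Longrightarrow> is_leader_profile G \<sigma>"
  unfolding is_nash_def is_leader_profile_def followers_def by auto

lemma part3: "wf_mmpg G \<Longrightarrow> is_leader_profile G \<sigma> \<Longrightarrow> is_isp G \<sigma> (\<lambda>_ _. 0)"
  unfolding is_leader_profile_def is_isp_def is_incentive_profile_def follower_overall_def
  by (auto simp: inc_zero)

lemma lo_zero: "leader_overall G \<sigma> (\<lambda>_ _. 0) = raw_payoff G \<sigma> (leader G)"
  unfolding leader_overall_def by (simp add: inc_zero)


definition vl :: "nat \<Rightarrow> nat \<Rightarrow> real" where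
  "vl p u = (if p = 0 then (if u = 1 then 1 else if u = 3 then 2 else if u = 4 then 4 else 0)
             else (if u = 1 then 1 else if u = 3 then 2 else 0))"

definition G0 :: "(nat, nat) mmpg" where
  "G0 = \<lparr>players = {0,1}, leader = 0, verts = {0,1,2,3,4},
     owns = (\<lambda>p. if p = 0 then {2,3,4} else if p = 1 then {0,1} else {}), init = 0,
     edges = {(0,1),(0,2),(1,1),(2,3),(2,4),(3,3),(4,4)},
     rew = (\<lambda>p e. if fst e = snd e then vl p (fst e) else 0)\<rparr>"

lemma G0_simps: "players G0 = {0,1}" "leader G0 = 0" "init G0 = 0"
  "followers G0 = {1}" "edges G0 = {(0,1),(0,2),(1,1),(2,3),(2,4),(3,3),(4,4)}"
  "rew G0 p (u,u) = vl p u"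
  "owns G0 p = (if p = 0 then {2,3,4} else if p = 1 then {0,1} else {})"
  by (auto simp: G0_def followers_def)

lemma wf_G0: "wf_mmpg G0"
  unfolding wf_mmpg_def by (auto simp: G0_def vl_def One_nat_def)

lemma owner0: "owner G0 0 = 1" unfolding owner_def by (rule the_equality) (auto simp: G0_simps)
lemma owner2: "owner G0 2 = 0" unfolding owner_def by (rule the_equality) (auto simp: G0_simps)

lemma G0_play1: "play G0 \<sigma> 1 = \<sigma> 1 [0]"
  by (simp add: play_def G0_simps owner0)

lemma G0_hist1: "hist G0 \<sigma> 1 = [0, \<sigma> 1 [0]]"
  by (simp add: G0_simps owner0)

lemma G0_x: "is_profile G0 \<sigma> \<Longrightarrow> \<sigma> 1 [0] = 1 \<or> \<sigma> 1 [0] = 2"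
  using play_edge[OF wf_G0, of \<sigma> 0] by (auto simp: play_0 G0_simps G0_play1[simplified])

lemma G0_play2: assumes "\<sigma> 1 [0] = 2" shows "play G0 \<sigma> 2 = \<sigma> 0 [0,2]"
proof -
  have "play G0 \<sigma> 2 = play G0 \<sigma> (Suc 1)" by (simp add: numeral_2_eq_2)
  also have "\<dots> = \<sigma> (owner G0 (play G0 \<sigma> 1)) (hist G0 \<sigma> 1)" by (rule play_Suc)
  also have "\<dots> = \<sigma> 0 [0,2]" unfolding G0_play1 G0_hist1 assms owner2 ..
  finally show ?thesis .
qed

lemma G0_y: "is_profile G0 \<sigma> \<Longrightarrow> \<sigma> 1 [0] = 2 \<Longrightarrow> \<sigma> 0 [0,2] = 3 \<or> \<sigma> 0 [0,2] = 4"
  using play_edge[OF wf_G0, of \<sigma> 1] G0_play1[of \<sigma>] G0_play2[of \<sigma>]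
  by (auto simp: G0_simps numeral_2_eq_2)

lemma outA: assumes "is_profile G0 \<sigma>" "\<sigma> 1 [0] = 1" shows "\<forall>i\<ge>1. play G0 \<sigma> i = 1"
proof (rule absorb[OF wf_G0 assms(1)])
  show "play G0 \<sigma> 1 = 1" unfolding G0_play1 assms(2) ..
  show "\<forall>v. (1, v) \<in> edges G0 \<longrightarrow> v = 1" by (simp add: G0_simps)
qed

lemma outBC: "is_profile G0 \<sigma> \<Longrightarrow> \<sigma> 1 [0] = 2 \<Longrightarrow> \<sigma> 0 [0,2] = y \<Longrightarrow> y = 3 \<or> y = 4 \<Longrightarrow>
   \<forall>i\<ge>2. play G0 \<sigma> i = y"
  by (rule absorb[OF wf_G0]) (auto simp: G0_play2 G0_simps)

lemma rawA: "is_profile G0 \<sigma> \<Longrightarrow> \<sigma> 1 [0] = 1 \<Longrightarrow> raw_payoff G0 \<sigma> p = ereal (vl p 1)"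
  using raw_const[OF outA] by (simp add: G0_simps)

lemma rawBC: "is_profile G0 \<sigma> \<Longrightarrow> \<sigma> 1 [0] = 2 \<Longrightarrow> \<sigma> 0 [0,2] = y \<Longrightarrow> y = 3 \<or> y = 4 \<Longrightarrow>
   raw_payoff G0 \<sigma> p = ereal (vl p y)"
  using raw_const[OF outBC] by (simp add: G0_simps)

definition gc :: "nat list \<Rightarrow> real" where "gc h = (if 2 \<in> set h then 1 else 0)"

lemma incA: assumes "is_profile G0 \<sigma>" "\<sigma> 1 [0] = 1" shows "inc_value G0 \<sigma> gc = 0"
proof -
  have "\<forall>i\<ge>0. gc (hist G0 \<sigma> i) = 0"
  proof (intro allI impI)
    fix i :: nat
    have "\<forall>j. play G0 \<sigma> j \<noteq> 2"
    proof
      fix j show "play G0 \<sigma> j \<noteq> 2"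
        using outA[OF assms] by (cases j) (auto simp: play_0 G0_simps)
    qed
    then show "gc (hist G0 \<sigma> i) = 0" unfolding gc_def hist_map by auto
  qed
  then show ?thesis using inc_const[of 0] by (simp add: zero_ereal_def)
qed

lemma incC: assumes "\<sigma> 1 [0] = 2" shows "inc_value G0 \<sigma> gc = 1"
proof -
  have "\<forall>i\<ge>1. gc (hist G0 \<sigma> i) = 1"
  proof (intro allI impI)
    fix i :: nat assume "1 \<le> i"
    then have "play G0 \<sigma> 1 \<in> set (map (play G0 \<sigma>) [0..<Suc i])" by (simp del: upt_Suc)
    then have "2 \<in> set (hist G0 \<sigma> i)" unfolding hist_map G0_play1 assms .
    then show "gc (hist G0 \<sigma> i) = 1" unfolding gc_def by simp
  qed
  then show ?thesis using inc_const[of 1] by (simp add: one_ereal_def)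
qed

definition fs :: "nat \<Rightarrow> nat \<Rightarrow> nat list \<Rightarrow> nat" where
  "fs X Y h = (if last h = 0 then X else if last h = 2 then Y else last h)"

lemma fs_strat: "X = 1 \<or> X = 2 \<Longrightarrow> Y = 3 \<or> Y = 4 \<Longrightarrow> is_strategy G0 p (fs X Y)"
  unfolding is_strategy_def fs_def by (auto simp: G0_simps split: if_splits)

lemma fs_prof: "X = 1 \<or> X = 2 \<Longrightarrow> Y = 3 \<or> Y = 4 \<Longrightarrow> is_profile G0 (\<lambda>_. fs X Y)"
  unfolding is_profile_def using fs_strat by blast

lemma fs_app: "fs X Y [0] = X" "fs X Y [0,2] = Y" by (auto simp: fs_def)

lemma lo_G0: "leader_overall G0 \<sigma> \<gamma> = raw_payoff G0 \<sigma> 0 - inc_value G0 \<sigma> (\<gamma> 1)"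
  unfolding leader_overall_def by (simp add: G0_simps)

lemma lp_le2: assumes "is_leader_profile G0 \<sigma>" shows "raw_payoff G0 \<sigma> 0 \<le> 2"
proof -
  have pr: "is_profile G0 \<sigma>" using assms unfolding is_leader_profile_def by blast
  show ?thesis
  proof (cases "\<sigma> 1 [0] = 1")
    case True then show ?thesis using rawA[OF pr] by (simp add: vl_def One_nat_def)
  next
    case False
    then have x: "\<sigma> 1 [0] = 2" using G0_x[OF pr] by blast
    show ?thesis
    proof (cases "\<sigma> 0 [0,2] = 3")
      case True then show ?thesis using rawBC[OF pr x] by (simp add: vl_def One_nat_def)
    next
      case False
      then have y: "\<sigma> 0 [0,2] = 4" using G0_y[OF pr x] by blast
      let ?s = "\<sigma>(1 := fs 1 3)"
      have st: "is_strategy G0 1 (fs 1 3)" by (rule fs_strat) auto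
      have "raw_payoff G0 ?s 1 \<le> raw_payoff G0 \<sigma> 1"
        using assms st unfolding is_leader_profile_def by (simp add: G0_simps)
      moreover have "raw_payoff G0 ?s 1 = 1"
        using rawA[OF profile_upd[OF pr st]] by (simp add: fs_app vl_def One_nat_def)
      moreover have "raw_payoff G0 \<sigma> 1 = 0"
        using rawBC[OF pr x y] by (simp add: vl_def One_nat_def)
      ultimately show ?thesis by simp
    qed
  qed
qed

lemma nash_1: assumes "is_nash G0 \<sigma>" shows "raw_payoff G0 \<sigma> 0 = 1"
proof -
  have pr: "is_profile G0 \<sigma>" using assms unfolding is_nash_def by blast
  show ?thesis
  proof (cases "\<sigma> 1 [0] = 1")
    case True then show ?thesis using rawA[OF pr] by (simp add: vl_def One_nat_def)
  next
    case False
    then have x: "\<sigma> 1 [0] = 2" using G0_x[OF pr] by blast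
    show ?thesis
    proof (cases "\<sigma> 0 [0,2] = 3")
      case True
      let ?s = "\<sigma>(0 := fs 2 4)"
      have st: "is_strategy G0 0 (fs 2 4)" by (rule fs_strat) auto
      have "raw_payoff G0 ?s 0 \<le> raw_payoff G0 \<sigma> 0"
        using assms st unfolding is_nash_def by (simp add: G0_simps)
      moreover have "raw_payoff G0 ?s 0 = 4"
        using rawBC[OF profile_upd[OF pr st], of 4] x by (simp add: fs_app vl_def One_nat_def)
      moreover have "raw_payoff G0 \<sigma> 0 = 2"
        using rawBC[OF pr x True] by (simp add: vl_def One_nat_def)
      ultimately show ?thesis by simp
    next
      case False
      then have y: "\<sigma> 0 [0,2] = 4" using G0_y[OF pr x] by blast
      let ?s = "\<sigma>(1 := fs 1 3)"
      have st: "is_strategy G0 1 (fs 1 3)" by (rule fs_strat) auto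
      have "raw_payoff G0 ?s 1 \<le> raw_payoff G0 \<sigma> 1"
        using assms st unfolding is_nash_def by (simp add: G0_simps)
      moreover have "raw_payoff G0 ?s 1 = 1"
        using rawA[OF profile_upd[OF pr st]] by (simp add: fs_app vl_def One_nat_def)
      moreover have "raw_payoff G0 \<sigma> 1 = 0"
        using rawBC[OF pr x y] by (simp add: vl_def One_nat_def)
      ultimately show ?thesis by simp
    qed
  qed
qed

lemma F23_lp: "is_leader_profile G0 (\<lambda>_. fs 2 3)" "raw_payoff G0 (\<lambda>_. fs 2 3) 0 = 2"
proof -
  have pr: "is_profile G0 (\<lambda>_. fs 2 3)" by (rule fs_prof) auto
  show "raw_payoff G0 (\<lambda>_. fs 2 3) 0 = 2" using rawBC[OF pr, of 3] by (simp add: fs_app vl_def One_nat_def)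
  have "raw_payoff G0 ((\<lambda>_. fs 2 3)(1 := s)) 1 \<le> raw_payoff G0 (\<lambda>_. fs 2 3) 1"
    if st: "is_strategy G0 1 s" for s
  proof -
    let ?s = "((\<lambda>_::nat. fs 2 3)(1 := s))"
    have p2: "is_profile G0 ?s" by (rule profile_upd[OF pr st])
    have r: "raw_payoff G0 (\<lambda>_. fs 2 3) 1 = 2" using rawBC[OF pr, of 3] by (simp add: fs_app vl_def One_nat_def)
    show ?thesis
    proof (cases "?s 1 [0] = 1")
      case True then show ?thesis using rawA[OF p2, of 1] True r by (simp add: vl_def One_nat_def)
    next
      case False
      then have x: "?s 1 [0] = 2" using G0_x[OF p2] by blast
      have "?s 0 [0,2] = 3" by (simp add: fs_app)
      have "raw_payoff G0 ?s 1 = ereal (vl 1 3)" by (rule rawBC[OF p2 x \<open>?s 0 [0,2] = 3\<close>]) simp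
      then show ?thesis using r by (simp add: vl_def One_nat_def)
    qed
  qed
  then show "is_leader_profile G0 (\<lambda>_. fs 2 3)" using pr
    unfolding is_leader_profile_def by (simp add: G0_simps)
qed

lemma F14_nash: "is_nash G0 (\<lambda>_. fs 1 4)"
proof -
  have pr: "is_profile G0 (\<lambda>_. fs 1 4)" by (rule fs_prof) auto
  have "raw_payoff G0 ((\<lambda>_. fs 1 4)(p := s)) p \<le> raw_payoff G0 (\<lambda>_. fs 1 4) p"
    if p: "p \<in> {0,1}" and st: "is_strategy G0 p s" for p s
  proof -
    let ?s = "((\<lambda>_::nat. fs 1 4)(p := s))"
    have p2: "is_profile G0 ?s" by (rule profile_upd[OF pr st])
    have r: "raw_payoff G0 (\<lambda>_. fs 1 4) p = 1" using rawA[OF pr] by (simp add: fs_app vl_def One_nat_def)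
    show ?thesis
    proof (cases "?s 1 [0] = 1")
      case True then show ?thesis using rawA[OF p2, of p] r by (simp add: vl_def One_nat_def)
    next
      case False
      then have x: "?s 1 [0] = 2" using G0_x[OF p2] by blast
      then have p1: "p = 1" using p by (auto simp: fs_app)
      have y: "?s 0 [0,2] = 4" using p1 by (simp add: fs_app)
      have "raw_payoff G0 ?s 1 = ereal (vl 1 4)" by (rule rawBC[OF p2 x y]) simp
      then show ?thesis using r p1 by (simp add: vl_def One_nat_def)
    qed
  qed
  then show ?thesis using pr unfolding is_nash_def by (simp add: G0_simps)
qed

lemma ereal_aux1: "(i::ereal) \<ge> 0 \<Longrightarrow> ereal a - i \<le> ereal a"
  by (cases i) auto

lemma ereal_aux2: "(i::ereal) \<ge> 1 \<Longrightarrow> ereal 4 - i \<le> 3"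
  by (cases i) auto

lemma ereal_aux3: "(i'::ereal) \<ge> 0 \<Longrightarrow> 1 + i' \<le> 0 + i \<Longrightarrow> i \<ge> 1"
  by (cases i'; cases i) auto

lemma isp_le3: assumes "is_isp G0 \<sigma> \<gamma>" shows "leader_overall G0 \<sigma> \<gamma> \<le> 3"
proof -
  have pr: "is_profile G0 \<sigma>" and ip: "is_incentive_profile G0 \<gamma>"
    using assms unfolding is_isp_def by blast+
  have f1: "1 \<in> followers G0" by (simp add: G0_simps)
  have nn: "inc_value G0 \<sigma> (\<gamma> 1) \<ge> 0" by (rule inc_nonneg[OF wf_G0 pr ip f1])
  show ?thesis
  proof (cases "\<sigma> 1 [0] = 1")
    case True
    have "leader_overall G0 \<sigma> \<gamma> \<le> ereal (vl 0 1)"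
      unfolding lo_G0 rawA[OF pr True] by (rule ereal_aux1[OF nn])
    then show ?thesis by (rule order_trans) (simp add: vl_def)
  next
    case False
    then have x: "\<sigma> 1 [0] = 2" using G0_x[OF pr] by blast
    show ?thesis
    proof (cases "\<sigma> 0 [0,2] = 3")
      case True
      have "leader_overall G0 \<sigma> \<gamma> \<le> ereal (vl 0 3)"
        unfolding lo_G0 rawBC[OF pr x True disjI1[OF refl]] by (rule ereal_aux1[OF nn])
      then show ?thesis by (rule order_trans) (simp add: vl_def)
    next
      case False
      then have y: "\<sigma> 0 [0,2] = 4" using G0_y[OF pr x] by blast
      let ?s = "\<sigma>(1 := fs 1 3)"
      have st: "is_strategy G0 1 (fs 1 3)" by (rule fs_strat) auto
      have p2: "is_profile G0 ?s" by (rule profile_upd[OF pr st])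
      have "follower_overall G0 ?s \<gamma> 1 \<le> follower_overall G0 \<sigma> \<gamma> 1"
        using assms st unfolding is_isp_def by (simp add: G0_simps)
      moreover have "raw_payoff G0 ?s 1 = 1"
        using rawA[OF p2] by (simp add: fs_app vl_def One_nat_def)
      moreover have "raw_payoff G0 \<sigma> 1 = 0"
        using rawBC[OF pr x y] by (simp add: vl_def One_nat_def)
      moreover have "inc_value G0 ?s (\<gamma> 1) \<ge> 0" by (rule inc_nonneg[OF wf_G0 p2 ip f1])
      ultimately have "inc_value G0 \<sigma> (\<gamma> 1) \<ge> 1"
        unfolding follower_overall_def using ereal_aux3 by metis
      moreover have "raw_payoff G0 \<sigma> 0 = ereal 4"
        using rawBC[OF pr x y] by (simp add: vl_def One_nat_def)
      ultimately show ?thesis unfolding lo_G0 using ereal_aux2 by simp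
    qed
  qed
qed

lemma F24_isp: "is_isp G0 (\<lambda>_. fs 2 4) (\<lambda>_. gc)" "leader_overall G0 (\<lambda>_. fs 2 4) (\<lambda>_. gc) = 3"
proof -
  have pr: "is_profile G0 (\<lambda>_. fs 2 4)" by (rule fs_prof) auto
  have x: "(\<lambda>_. fs 2 4) 1 [0] = 2" by (simp add: fs_app)
  have r0: "raw_payoff G0 (\<lambda>_. fs 2 4) p = ereal (vl p 4)" for p
    using rawBC[OF pr x, of 4] by (simp add: fs_app)
  have i0: "inc_value G0 (\<lambda>_. fs 2 4) gc = 1" by (rule incC) (simp add: fs_app)
  show "leader_overall G0 (\<lambda>_. fs 2 4) (\<lambda>_. gc) = 3"
    unfolding lo_G0 r0 i0 by (simp add: vl_def one_ereal_def)
  have ip: "is_incentive_profile G0 (\<lambda>_. gc)" unfolding is_incentive_profile_def gc_def by simp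
  have "follower_overall G0 ((\<lambda>_. fs 2 4)(1 := s)) (\<lambda>_. gc) 1 \<le> follower_overall G0 (\<lambda>_. fs 2 4) (\<lambda>_. gc) 1"
    if st: "is_strategy G0 1 s" for s
  proof -
    let ?s = "((\<lambda>_::nat. fs 2 4)(1 := s))"
    have p2: "is_profile G0 ?s" by (rule profile_upd[OF pr st])
    have r: "follower_overall G0 (\<lambda>_. fs 2 4) (\<lambda>_. gc) 1 = 1"
      unfolding follower_overall_def r0 i0 by (simp add: vl_def One_nat_def)
    show ?thesis
    proof (cases "?s 1 [0] = 1")
      case True then show ?thesis using rawA[OF p2, of 1] incA[OF p2] True r
        unfolding follower_overall_def by (simp add: vl_def One_nat_def)
    next
      case False
      then have x: "?s 1 [0] = 2" using G0_x[OF p2] by blast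
      have y: "?s 0 [0,2] = 4" by (simp add: fs_app)
      have "raw_payoff G0 ?s 1 = ereal (vl 1 4)" by (rule rawBC[OF p2 x y]) simp
      then show ?thesis using incC[of ?s, OF x] r
        unfolding follower_overall_def by (simp add: vl_def One_nat_def)
    qed
  qed
  then show "is_isp G0 (\<lambda>_. fs 2 4) (\<lambda>_. gc)" using pr ip
    unfolding is_isp_def by (simp add: G0_simps)
qed


lemma G0_ie: "is_incentive_eq G0 (\<lambda>_. fs 2 4) (\<lambda>_. gc)"
  unfolding is_incentive_eq_def using F24_isp isp_le3 by simp

lemma G0_le: "is_leader_eq G0 (\<lambda>_. fs 2 3)"
  unfolding is_leader_eq_def using F23_lp lp_le2 by (simp add: G0_simps)

theorem theorem1:
  shows
  "(\<forall>(G :: ('p, 'v) mmpg) \<sigma>N \<sigma>L \<sigma>I \<gamma>I.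
      wf_mmpg G \<longrightarrow> is_nash G \<sigma>N \<longrightarrow> is_leader_eq G \<sigma>L \<longrightarrow> is_incentive_eq G \<sigma>I \<gamma>I \<longrightarrow>
      raw_payoff G \<sigma>N (leader G) \<le> raw_payoff G \<sigma>L (leader G) \<and>
      raw_payoff G \<sigma>L (leader G) \<le> leader_overall G \<sigma>I \<gamma>I)
 \<and> (\<forall>(G :: ('p, 'v) mmpg) \<sigma>. wf_mmpg G \<longrightarrow> is_nash G \<sigma> \<longrightarrow> is_leader_profile G \<sigma>)
 \<and> (\<forall>(G :: ('p, 'v) mmpg) \<sigma>. wf_mmpg G \<longrightarrow> is_leader_profile G \<sigma> \<longrightarrow> is_isp G \<sigma> (\<lambda>_ _. 0))
 \<and> (\<exists>G :: (nat, nat) mmpg. wf_mmpg G \<and>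
      (\<exists>\<sigma>. is_nash G \<sigma>) \<and> (\<exists>\<sigma>. is_leader_eq G \<sigma>) \<and> (\<exists>\<sigma> \<gamma>. is_incentive_eq G \<sigma> \<gamma>) \<and>
      (\<forall>\<sigma>N \<sigma>L \<sigma>I \<gamma>I. is_nash G \<sigma>N \<longrightarrow> is_leader_eq G \<sigma>L \<longrightarrow> is_incentive_eq G \<sigma>I \<gamma>I \<longrightarrow>
         raw_payoff G \<sigma>N (leader G) < raw_payoff G \<sigma>L (leader G) \<and>
         raw_payoff G \<sigma>L (leader G) < leader_overall G \<sigma>I \<gamma>I))"
proof (intro conjI allI impI)
  fix G :: "('p,'v) mmpg" and \<sigma>N \<sigma>L \<sigma>I \<gamma>I
  assume wf: "wf_mmpg G" and n: "is_nash G \<sigma>N" and l: "is_leader_eq G \<sigma>L"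
    and i: "is_incentive_eq G \<sigma>I \<gamma>I"
  have lpN: "is_leader_profile G \<sigma>N" by (rule part2[OF wf n])
  show "raw_payoff G \<sigma>N (leader G) \<le> raw_payoff G \<sigma>L (leader G)"
    using l lpN unfolding is_leader_eq_def by blast
  have lpL: "is_leader_profile G \<sigma>L" using l unfolding is_leader_eq_def by blast
  have "is_isp G \<sigma>L (\<lambda>_ _. 0)" by (rule part3[OF wf lpL])
  then have "leader_overall G \<sigma>L (\<lambda>_ _. 0) \<le> leader_overall G \<sigma>I \<gamma>I"
    using i unfolding is_incentive_eq_def by blast
  then show "raw_payoff G \<sigma>L (leader G) \<le> leader_overall G \<sigma>I \<gamma>I" by (simp add: lo_zero)
next
  fix G :: "('p,'v) mmpg" and \<sigma>
  show "wf_mmpg G \<Longrightarrow> is_nash G \<sigma> \<Longrightarrow> is_leader_profile G \<sigma>" by (rule part2)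
next
  fix G :: "('p,'v) mmpg" and \<sigma>
  show "wf_mmpg G \<Longrightarrow> is_leader_profile G \<sigma> \<Longrightarrow> is_isp G \<sigma> (\<lambda>_ _. 0)" by (rule part3)
next
  show "\<exists>G :: (nat, nat) mmpg. wf_mmpg G \<and>
      (\<exists>\<sigma>. is_nash G \<sigma>) \<and> (\<exists>\<sigma>. is_leader_eq G \<sigma>) \<and> (\<exists>\<sigma> \<gamma>. is_incentive_eq G \<sigma> \<gamma>) \<and>
      (\<forall>\<sigma>N \<sigma>L \<sigma>I \<gamma>I. is_nash G \<sigma>N \<longrightarrow> is_leader_eq G \<sigma>L \<longrightarrow> is_incentive_eq G \<sigma>I \<gamma>I \<longrightarrow>
         raw_payoff G \<sigma>N (leader G) < raw_payoff G \<sigma>L (leader G) \<and>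
         raw_payoff G \<sigma>L (leader G) < leader_overall G \<sigma>I \<gamma>I)"
  proof (intro exI conjI allI impI)
    show "wf_mmpg G0" by (rule wf_G0)
    show "is_nash G0 (\<lambda>_. fs 1 4)" by (rule F14_nash)
    show "is_leader_eq G0 (\<lambda>_. fs 2 3)" by (rule G0_le)
    show "is_incentive_eq G0 (\<lambda>_. fs 2 4) (\<lambda>_. gc)" by (rule G0_ie)
    fix \<sigma>N \<sigma>L \<sigma>I \<gamma>I
    assume n: "is_nash G0 \<sigma>N" and l: "is_leader_eq G0 \<sigma>L" and i: "is_incentive_eq G0 \<sigma>I \<gamma>I"
    have a: "raw_payoff G0 \<sigma>N 0 = 1" by (rule nash_1[OF n])
    have b: "2 \<le> raw_payoff G0 \<sigma>L 0" using l F23_lp unfolding is_leader_eq_def by (metis G0_simps(2))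
    have c: "raw_payoff G0 \<sigma>L 0 \<le> 2" using l lp_le2 unfolding is_leader_eq_def by blast
    have d: "3 \<le> leader_overall G0 \<sigma>I \<gamma>I" using i F24_isp unfolding is_incentive_eq_def by metis
    show "raw_payoff G0 \<sigma>N (leader G0) < raw_payoff G0 \<sigma>L (leader G0)"
    proof -
      have "(1::ereal) < 2" by simp
      then have "1 < raw_payoff G0 \<sigma>L 0" using b by (rule less_le_trans)
      then show ?thesis using a by (simp add: G0_simps)
    qed
    show "raw_payoff G0 \<sigma>L (leader G0) < leader_overall G0 \<sigma>I \<gamma>I"
    proof -
      have "(2::ereal) < 3" by simp
      then have "raw_payoff G0 \<sigma>L 0 < 3" using c by (rule le_less_trans[rotated])
      then have "raw_payoff G0 \<sigma>L 0 < leader_overall G0 \<sigma>I \<gamma>I" using d by (rule less_le_trans)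
      then show ?thesis by (simp add: G0_simps)
    qed
  qed
qed

end
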